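(* Let $p$ be a prime and let $f:\mathbb{Z}_p\times\mathbb{Z}_p\to\mathbb{Z}_p$ be additively inseparable. Then for all $n,m\ge1$ and every function $F:\mathbb{Z}_p^n\times\mathbb{Z}_p^m\to\mathbb{Z}_p$ there is a protocol with the following properties. Alice, holding $\vec x\in\mathbb{Z}_p^n$, and Bob, holding $\vec y\in\mathbb{Z}_p^m$, share finitely many copies of $P^f$ and shared randomness, and do not communicate. On every input, Alice outputs $a$ and Bob outputs $b$ with $a-b=F(\vec x,\vec y)$ with probability $1$. Consequently, given access to copies of $P^f$, Bob can compute $F(\vec x,\vec y)$ with certainty after Alice sends him a single element of $\mathbb{Z}_p$. Thus the deterministic communication complexity of every such $F$ becomes trivial.
   Context: Let $p$ be a prime. All arithmetic on elements of $\mathbb{Z}_p$ is modulo $p$. A box is a conditional probability distribution $P(a,b\mid x,y)$ with $a,b,x,y\in\mathbb{Z}_p$. It is shared by Alice, who supplies $x$ and receives $a$, and Bob, who supplies $y$ and receives $b$. Different copies act independently. For $f:\mathbb{Z}_p\times\mathbb{Z}_p\to\mathbb{Z}_p$, the functional box is $P^f(a,b\mid x,y)=1/p$ if $a-b=f(x,y)$, and $0$ otherwise. A function $f$ is additively separable if $f(x,y)=g(x)+h(y)$ for some $g,h:\mathbb{Z}_p\to\mathbb{Z}_p$. Otherwise it is additively inseparable. In a protocol, each party's inputs to the box copies may depend on their own input, the shared randomness, and their own previously obtained box outputs. *)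

theory Defs
  imports "HOL-Probability.Probability" "HOL-Number_Theory.Cong"
begin

text \<open>Elements of Z_p are represented by integers; all comparisons are modulo p.
  Box inputs are reduced modulo p, box outputs lie in {0..<p}.\<close>

definition additively_separable :: "nat \<Rightarrow> (int \<Rightarrow> int \<Rightarrow> int) \<Rightarrow> bool" where
  "additively_separable p f \<longleftrightarrow>
     (\<exists>g h :: int \<Rightarrow> int. \<forall>x\<in>{0..<int p}. \<forall>y\<in>{0..<int p}.
        [f x y = g x + h y] (mod int p))"

text \<open>One use of a copy of the functional box P^f on inputs x, y:
  a is uniform on Z_p and b = a - f(x,y), i.e. P(a,b|x,y) = 1/p iff a - b = f(x,y).\<close>
definition functional_box :: "nat \<Rightarrow> (int \<Rightarrow> int \<Rightarrow> int) \<Rightarrow> int \<Rightarrow> int \<Rightarrow> (int \<times> int) pmf" where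
  "functional_box p f x y =
     map_pmf (\<lambda>a. (a, (a - f (x mod int p) (y mod int p)) mod int p)) (pmf_of_set {0..<int p})"

text \<open>Alice's input to the next copy depends on
  her input xs, the shared randomness r and her previous box outputs; likewise for Bob.\<close>
fun run_boxes ::
  "nat \<Rightarrow> (int \<Rightarrow> int \<Rightarrow> int)
   \<Rightarrow> (int list \<Rightarrow> nat \<Rightarrow> int list \<Rightarrow> int) \<Rightarrow> (int list \<Rightarrow> nat \<Rightarrow> int list \<Rightarrow> int)
   \<Rightarrow> int list \<Rightarrow> int list \<Rightarrow> nat \<Rightarrow> nat \<Rightarrow> (int list \<times> int list) pmf" where
  "run_boxes p f inA inB xs ys r 0 = return_pmf ([], [])"
| "run_boxes p f inA inB xs ys r (Suc j) =
     bind_pmf (run_boxes p f inA inB xs ys r j) (\<lambda>(as, bs).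
       map_pmf (\<lambda>(a, b). (as @ [a], bs @ [b]))
         (functional_box p f (inA xs r as) (inB ys r bs)))"

definition protocol_outcome ::
  "nat \<Rightarrow> (int \<Rightarrow> int \<Rightarrow> int) \<Rightarrow> nat \<Rightarrow> nat pmf
   \<Rightarrow> (int list \<Rightarrow> nat \<Rightarrow> int list \<Rightarrow> int) \<Rightarrow> (int list \<Rightarrow> nat \<Rightarrow> int list \<Rightarrow> int)
   \<Rightarrow> (int list \<Rightarrow> nat \<Rightarrow> int list \<Rightarrow> int) \<Rightarrow> (int list \<Rightarrow> nat \<Rightarrow> int list \<Rightarrow> int)
   \<Rightarrow> int list \<Rightarrow> int list \<Rightarrow> (int \<times> int) pmf" where
  "protocol_outcome p f k R inA inB outA outB xs ys =
     bind_pmf R (\<lambda>r. map_pmf (\<lambda>(as, bs). (outA xs r as, outB ys r bs))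
                              (run_boxes p f inA inB xs ys r k))"

definition Zp_vectors :: "nat \<Rightarrow> nat \<Rightarrow> int list set" where
  "Zp_vectors p n = {v. length v = n \<and> set v \<subseteq> {0..<int p}}"

end

theory Submission
  imports Defs
begin

lemma run_boxes_inv:
  "\<forall>(as, bs)\<in>set_pmf (run_boxes p f inA inB xs ys r j).
     length as = j \<and> length bs = j \<and>
     (\<forall>i<j. [as!i - bs!i = f (inA xs r (take i as) mod int p) (inB ys r (take i bs) mod int p)] (mod int p))"
proof (induction j)
  case 0
  then show ?case by simp
next
  case (Suc j)
  show ?case
  proof (clarsimp simp del: run_boxes.simps)
    fix as' bs'
    assume "(as', bs') \<in> set_pmf (run_boxes p f inA inB xs ys r (Suc j))"
    then obtain as bs a where ab: "(as, bs) \<in> set_pmf (run_boxes p f inA inB xs ys r j)"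
      and e: "as' = as @ [a]" "bs' = bs @ [(a - f (inA xs r as mod int p) (inB ys r bs mod int p)) mod int p]"
      by (auto simp: functional_box_def)
    from Suc.IH ab have l: "length as = j" "length bs = j"
      and c: "\<forall>i<j. [as!i - bs!i = f (inA xs r (take i as) mod int p) (inB ys r (take i bs) mod int p)] (mod int p)"
      by auto
    have last: "[a - (a - f (inA xs r as mod int p) (inB ys r bs mod int p)) mod int p
          = f (inA xs r as mod int p) (inB ys r bs mod int p)] (mod int p)"
    proof -
      define t where "t = f (inA xs r as mod int p) (inB ys r bs mod int p)"
      have "(a - (a - t) mod int p) mod int p = (a - (a - t)) mod int p" by (rule mod_diff_right_eq)
      then have "[a - (a - t) mod int p = t] (mod int p)" by (simp add: cong_def)
      then show ?thesis by (simp add: t_def)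
    qed
    show "length as' = Suc j \<and> length bs' = Suc j \<and>
      (\<forall>i<Suc j. [as' ! i - bs' ! i = f (inA xs r (take i as') mod int p) (inB ys r (take i bs') mod int p)] (mod int p))"
    proof (intro conjI allI impI)
      fix i assume "i < Suc j"
      then consider "i < j" | "i = j" by linarith
      then show "[as' ! i - bs' ! i = f (inA xs r (take i as') mod int p) (inB ys r (take i bs') mod int p)] (mod int p)"
      proof cases
        case 1 then show ?thesis using c l e by (simp add: nth_append)
      next
        case 2 then show ?thesis using last l e by (simp add: nth_append)
      qed
    qed (use e l in auto)
  qed
qed

theorem theorem1:
  fixes p :: nat and f :: "int \<Rightarrow> int \<Rightarrow> int" and n m :: nat
    and F :: "int list \<Rightarrow> int list \<Rightarrow> int"
  assumes "prime p"
    and "\<not> additively_separable p f"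
    and "n \<ge> 1" and "m \<ge> 1"
  shows "\<exists>(k::nat) (R::nat pmf) inA inB outA outB.
           \<forall>xs\<in>Zp_vectors p n. \<forall>ys\<in>Zp_vectors p m.
             measure_pmf.prob (protocol_outcome p f k R inA inB outA outB xs ys)
               {(a, b). [a - b = F xs ys] (mod int p)} = 1"
proof -
  let ?P = "int p"
  obtain x1 y1 where x1: "x1 \<in> {0..<?P}" and y1: "y1 \<in> {0..<?P}"
    and nc: "\<not> [f x1 y1 = f x1 0 + (f 0 y1 - f 0 0)] (mod ?P)"
  proof -
    have "\<not> (\<forall>x\<in>{0..<?P}. \<forall>y\<in>{0..<?P}. [f x y = f x 0 + (f 0 y - f 0 0)] (mod ?P))"
      using assms(2) unfolding additively_separable_def
      by (rule contrapos_nn) (rule exI[of _ "\<lambda>x. f x 0"], rule exI[of _ "\<lambda>y. f 0 y - f 0 0"], assumption)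
    then show ?thesis using that by blast
  qed
  define D where "D = f x1 y1 - f x1 0 - f 0 y1 + f 0 0"
  define A where "A = f x1 0 - f 0 0"
  define B where "B = f 0 y1 - f 0 0"
  have "\<not> ?P dvd D" using nc unfolding D_def cong_iff_dvd_diff
    by (simp add: algebra_simps)
  hence "coprime D ?P" using assms(1)
    by (meson prime_nat_int_transfer prime_imp_coprime coprime_commute)
  then obtain e where e: "[D * e = 1] (mod ?P)" using cong_solve_coprime_int by blast
  have fin: "finite (Zp_vectors p n \<times> Zp_vectors p m)"
    unfolding Zp_vectors_def
    using finite_lists_length_eq[OF finite_atLeastLessThan_int]
    by (simp add: conj_commute)
  obtain L where L: "set L = Zp_vectors p n \<times> Zp_vectors p m" "distinct L"
    using finite_distinct_list[OF fin] by blast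
  define k where "k = length L"
  define cA where "cA = (\<lambda>xs i. if fst (L!i) = xs then 1 else (0::int))"
  define cB where "cB = (\<lambda>ys i. if snd (L!i) = ys then 1 else (0::int))"
  define c where "c = (\<lambda>i. e * F (fst (L!i)) (snd (L!i)))"
  define inA where "inA = (\<lambda>(xs::int list) (r::nat) (as::int list). cA xs (length as) * x1)"
  define inB where "inB = (\<lambda>(ys::int list) (r::nat) (bs::int list). cB ys (length bs) * y1)"
  define outA where "outA = (\<lambda>(xs::int list) (r::nat) (as::int list). \<Sum>i<k. c i * (as!i - f 0 0 - cA xs i * A))"
  define outB where "outB = (\<lambda>(ys::int list) (r::nat) (bs::int list). \<Sum>i<k. c i * (bs!i + cB ys i * B))"
  have box: "[f (u * x1 mod ?P) (v * y1 mod ?P) = f 0 0 + u * A + v * B + u * v * D] (mod ?P)"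
    if "u \<in> {0,1}" "v \<in> {0,1}" for u v
    using that x1 y1 by (auto simp: A_def B_def D_def cong_def)
  show ?thesis
  proof (intro exI ballI)
    fix xs ys assume xs: "xs \<in> Zp_vectors p n" and ys: "ys \<in> Zp_vectors p m"
    have t: "(xs, ys) \<in> set L" using L xs ys by auto
    then obtain j0 where j0: "j0 < k" "L!j0 = (xs, ys)" unfolding k_def by (metis in_set_conv_nth)
    have key: "[outA xs r as - outB ys r bs = F xs ys] (mod ?P)"
      if "(as, bs) \<in> set_pmf (run_boxes p f inA inB xs ys r k)" for r as bs
    proof -
      from run_boxes_inv[of p f inA inB xs ys r k] that
      have l: "length as = k" "length bs = k"
        and c0: "\<forall>i<k. [as!i - bs!i = f (inA xs r (take i as) mod ?P) (inB ys r (take i bs) mod ?P)] (mod ?P)"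
        by auto
      have ci: "[as!i - bs!i = f 0 0 + cA xs i * A + cB ys i * B + cA xs i * cB ys i * D] (mod ?P)"
        if "i < k" for i
      proof -
        have "[as!i - bs!i = f (cA xs i * x1 mod ?P) (cB ys i * y1 mod ?P)] (mod ?P)"
          using c0 that l by (simp add: inA_def inB_def min_def)
        also have "[f (cA xs i * x1 mod ?P) (cB ys i * y1 mod ?P) = f 0 0 + cA xs i * A + cB ys i * B + cA xs i * cB ys i * D] (mod ?P)"
          by (rule box) (auto simp: cA_def cB_def)
        finally show ?thesis .
      qed
      have "outA xs r as - outB ys r bs = (\<Sum>i<k. c i * (as!i - bs!i - f 0 0 - cA xs i * A - cB ys i * B))"
        unfolding outA_def outB_def sum_subtractf[symmetric] by (simp add: algebra_simps)
      also have "[(\<Sum>i<k. c i * (as!i - bs!i - f 0 0 - cA xs i * A - cB ys i * B)) = (\<Sum>i<k. c i * (cA xs i * cB ys i * D))] (mod ?P)"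
      proof (rule cong_sum)
        fix i assume "i \<in> {..<k}"
        then have "[as!i - bs!i - f 0 0 - cA xs i * A - cB ys i * B = cA xs i * cB ys i * D] (mod ?P)"
          using ci[of i] by (simp add: cong_iff_dvd_diff algebra_simps)
        then show "[c i * (as!i - bs!i - f 0 0 - cA xs i * A - cB ys i * B) = c i * (cA xs i * cB ys i * D)] (mod ?P)"
          by (rule cong_scalar_left)
      qed
      also have "(\<Sum>i<k. c i * (cA xs i * cB ys i * D)) = (\<Sum>i<k. if i = j0 then c i * D else 0)"
      proof (rule sum.cong)
        fix i assume i: "i \<in> {..<k}"
        have "(L!i = (xs, ys)) = (i = j0)"
          using i L(2) j0 k_def nth_eq_iff_index_eq by (metis lessThan_iff)
        then show "c i * (cA xs i * cB ys i * D) = (if i = j0 then c i * D else 0)"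
          by (cases "L!i") (auto simp: cA_def cB_def)
      qed simp
      also have "\<dots> = c (j0) * D"
        using j0 by simp
      also have "\<dots> = F xs ys * (D * e)"
        using j0 by (simp add: c_def)
      also have "[F xs ys * (D * e) = F xs ys * 1] (mod ?P)"
        by (rule cong_scalar_left[OF e])
      finally show ?thesis by simp
    qed
    show "measure_pmf.prob (protocol_outcome p f k (return_pmf 0) inA inB outA outB xs ys)
               {(a, b). [a - b = F xs ys] (mod int p)} = 1"
      unfolding protocol_outcome_def
      by (subst measure_pmf.prob_eq_1) (auto simp: AE_measure_pmf_iff key)
  qed
qed

end
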